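(* Let $d\ge 2$, let $\Omega=(a_1,b_1)\times\cdots\times(a_d,b_d)$, and let $\mathcal{T}_{\mathbf h}$, $\mathcal{T}_{\mathbf h}'$, $\mathcal S_{\mathbf h}$ and the matrices $\widetilde{D}_{ij,0},\widehat{D}_{ij,0},\overline{D}_{ij,0}\in\mathbb R^{J_0\times J_0}$ be as described in the context. Then for all $i,j\in\{1,\dots,d\}$ the matrix $\widetilde{D}_{ij,0}-\widehat{D}_{ij,0}$ is symmetric positive definite. Furthermore, $-\widehat{D}_{ij,0} > -\overline{D}_{ij,0} > -\widetilde{D}_{ij,0}$ for all $i,j\in\{1,\dots,d\}$, where for matrices $X>Y$ means that $X-Y$ is symmetric positive definite.
   Context: Grid: for integers $J_i\ge 2$ put $h_i=(b_i-a_i)/(J_i-1)$, $\mathbf h=(h_1,\dots,h_d)$, and nodes $\mathbf x_\alpha=(a_1+(\alpha_1-1)h_1,\dots,a_d+(\alpha_d-1)h_d)$ for multi-indices $\alpha$ with $1\le\alpha_i\le J_i$; $\mathcal T_{\mathbf h}$ is the set of these nodes. The extended mesh is $\mathcal T_{\mathbf h}'=\mathcal T_{\mathbf h}\cup\{\mathbf y\pm 2h_i\mathbf e_i:\mathbf y\in\mathcal T_{\mathbf h}\cap\Omega,\ 1\le i\le d\}$ (the added points, lying outside $\overline\Omega$, are ghost points); $\{\mathbf e_i\}$ is the canonical basis. For a grid function $V$ on $\mathcal T_{\mathbf h}'$ write $V_\alpha=V(\mathbf x_\alpha)$ and define $\delta^+_{x_i,h_i}V(\mathbf x)=(V(\mathbf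 x+h_i\mathbf e_i)-V(\mathbf x))/h_i$, $\delta^-_{x_i,h_i}V(\mathbf x)=(V(\mathbf x)-V(\mathbf x-h_i\mathbf e_i))/h_i$, $\delta^2_{x_i,h_i}V(\mathbf x)=(V(\mathbf x-h_i\mathbf e_i)-2V(\mathbf x)+V(\mathbf x+h_i\mathbf e_i))/h_i^2$, $\Delta_{\mathbf h}=\sum_{i=1}^d\delta^2_{x_i,h_i}$, and $\widehat\delta^2_{x_i,x_j;h_i,h_j}=\tfrac12(\delta^-_{x_j,h_j}\delta^+_{x_i,h_i}+\delta^+_{x_j,h_j}\delta^-_{x_i,h_i})$, $\widetilde\delta^2_{x_i,x_j;h_i,h_j}=\tfrac12(\delta^+_{x_j,h_j}\delta^+_{x_i,h_i}+\delta^-_{x_j,h_j}\delta^-_{x_i,h_i})$, $\overline\delta^2_{x_i,x_j;h_i,h_j}=\tfrac12(\widehat\delta^2_{x_i,x_j;h_i,h_j}+\widetilde\delta^2_{x_i,x_j;h_i,h_j})$. Let $\mathcal S_{\mathbf h}$ be the set of boundary nodes $\mathbf x_\alpha\in\mathcal T_{\mathbf h}\cap\partial\Omega$ such that $\mathbf x_\alpha+h_i\mathbf e_i\in\mathcal T_{\mathbf h}\cap\Omega$ or $\mathbf x_\alpha-h_i\mathbf e_i\in\mathcal T_{\mathbf h}\cap\Omega$ for some $i$. Let $J_0=|\mathcal T_{\mathbf h}\cap\Omega|$. Every vector in $\mathbb R^{J_0}$ (values at interior nodes) is extended to a grid function $V$ on $\mathcal T_{\mathbf h}'$ by setting $V=0$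 on $\mathcal T_{\mathbf h}\cap\partial\Omega$ and choosing the ghost values so that $\Delta_{\mathbf h}V_\alpha=0$ for all $\mathbf x_\alpha\in\mathcal S_{\mathbf h}$. Then $\widetilde D_{ij,0}$, $\widehat D_{ij,0}$, $\overline D_{ij,0}$ denote the $J_0\times J_0$ matrices representing the linear maps $V\mapsto(\widetilde\delta^2_{x_i,x_j;h_i,h_j}V_\alpha)_{\mathbf x_\alpha\in\mathcal T_{\mathbf h}\cap\Omega}$, $V\mapsto(\widehat\delta^2_{x_i,x_j;h_i,h_j}V_\alpha)$, $V\mapsto(\overline\delta^2_{x_i,x_j;h_i,h_j}V_\alpha)$ respectively, with this extension built in. *)

theory Defs
  imports "HOL-Analysis.Analysis"
begin

text \<open>Domain Omega = box a b (open box), boundary = frontier (box a b).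
  Points of R^d are real^'n with CARD('n) = d; e_i = axis i 1.\<close>

definition hstep :: "real^'n \<Rightarrow> real^'n \<Rightarrow> ('n \<Rightarrow> nat) \<Rightarrow> 'n \<Rightarrow> real" where
  "hstep a b J i = (b$i - a$i) / (real (J i) - 1)"

definition node :: "real^'n \<Rightarrow> real^'n \<Rightarrow> ('n \<Rightarrow> nat) \<Rightarrow> ('n \<Rightarrow> nat) \<Rightarrow> real^'n" where
  "node a b J \<alpha> = (\<chi> i. a$i + (real (\<alpha> i) - 1) * hstep a b J i)"

definition mesh :: "real^'n \<Rightarrow> real^'n \<Rightarrow> ('n \<Rightarrow> nat) \<Rightarrow> (real^'n) set" where
  "mesh a b J = {node a b J \<alpha> | \<alpha>. \<forall>i. 1 \<le> \<alpha> i \<and> \<alpha> i \<le> J i}"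

definition inodes :: "real^'n \<Rightarrow> real^'n \<Rightarrow> ('n \<Rightarrow> nat) \<Rightarrow> (real^'n) set" where
  "inodes a b J = mesh a b J \<inter> box a b"

definition ext_mesh :: "real^'n \<Rightarrow> real^'n \<Rightarrow> ('n \<Rightarrow> nat) \<Rightarrow> (real^'n) set" where
  "ext_mesh a b J = mesh a b J
     \<union> {y + (2 * hstep a b J i) *\<^sub>R axis i 1 | y i. y \<in> inodes a b J}
     \<union> {y - (2 * hstep a b J i) *\<^sub>R axis i 1 | y i. y \<in> inodes a b J}"

definition dp :: "('n \<Rightarrow> real) \<Rightarrow> 'n \<Rightarrow> (real^'n \<Rightarrow> real) \<Rightarrow> real^'n \<Rightarrow> real" where
  "dp h i V x = (V (x + h i *\<^sub>R axis i 1) - V x) / h i"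

definition dm :: "('n \<Rightarrow> real) \<Rightarrow> 'n \<Rightarrow> (real^'n \<Rightarrow> real) \<Rightarrow> real^'n \<Rightarrow> real" where
  "dm h i V x = (V x - V (x - h i *\<^sub>R axis i 1)) / h i"

definition d2 :: "('n \<Rightarrow> real) \<Rightarrow> 'n \<Rightarrow> (real^'n \<Rightarrow> real) \<Rightarrow> real^'n \<Rightarrow> real" where
  "d2 h i V x = (V (x - h i *\<^sub>R axis i 1) - 2 * V x + V (x + h i *\<^sub>R axis i 1)) / (h i)^2"

definition lap_h :: "('n::finite \<Rightarrow> real) \<Rightarrow> (real^'n \<Rightarrow> real) \<Rightarrow> real^'n \<Rightarrow> real" where
  "lap_h h V x = (\<Sum>i\<in>UNIV. d2 h i V x)"

definition d2hat :: "('n \<Rightarrow> real) \<Rightarrow> 'n \<Rightarrow> 'n \<Rightarrow> (real^'n \<Rightarrow> real) \<Rightarrow> real^'n \<Rightarrow> real" where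
  "d2hat h i j V x = (dm h j (dp h i V) x + dp h j (dm h i V) x) / 2"

definition d2tilde :: "('n \<Rightarrow> real) \<Rightarrow> 'n \<Rightarrow> 'n \<Rightarrow> (real^'n \<Rightarrow> real) \<Rightarrow> real^'n \<Rightarrow> real" where
  "d2tilde h i j V x = (dp h j (dp h i V) x + dm h j (dm h i V) x) / 2"

definition d2bar :: "('n \<Rightarrow> real) \<Rightarrow> 'n \<Rightarrow> 'n \<Rightarrow> (real^'n \<Rightarrow> real) \<Rightarrow> real^'n \<Rightarrow> real" where
  "d2bar h i j V x = (d2hat h i j V x + d2tilde h i j V x) / 2"

definition Snodes :: "real^'n \<Rightarrow> real^'n \<Rightarrow> ('n \<Rightarrow> nat) \<Rightarrow> (real^'n) set" where
  "Snodes a b J = {x \<in> mesh a b J \<inter> frontier (box a b).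
      \<exists>i. x + hstep a b J i *\<^sub>R axis i 1 \<in> inodes a b J
        \<or> x - hstep a b J i *\<^sub>R axis i 1 \<in> inodes a b J}"

text \<open>Values of V off the extended mesh are irrelevant.\<close>
definition ghost_ext :: "real^'n::finite \<Rightarrow> real^'n \<Rightarrow> ('n \<Rightarrow> nat) \<Rightarrow> (real^'n \<Rightarrow> real) \<Rightarrow> (real^'n \<Rightarrow> real) \<Rightarrow> bool" where
  "ghost_ext a b J v V \<longleftrightarrow>
     (\<forall>x\<in>inodes a b J. V x = v x) \<and>
     (\<forall>x\<in>mesh a b J \<inter> frontier (box a b). V x = 0) \<and>
     (\<forall>x\<in>Snodes a b J. lap_h (hstep a b J) V x = 0)"

definition extend :: "real^'n::finite \<Rightarrow> real^'n \<Rightarrow> ('n \<Rightarrow> nat) \<Rightarrow> (real^'n \<Rightarrow> real) \<Rightarrow> (real^'n \<Rightarrow> real)" where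
  "extend a b J v = (SOME V. ghost_ext a b J v V)"

text \<open>Matrix (indexed by interior nodes) of the linear map v \<mapsto> (op (extension of v) x)_x:
  entry (x,y) is the image of the y-th unit vector evaluated at x.\<close>
definition opmat :: "real^'n::finite \<Rightarrow> real^'n \<Rightarrow> ('n \<Rightarrow> nat)
     \<Rightarrow> ((real^'n \<Rightarrow> real) \<Rightarrow> real^'n \<Rightarrow> real) \<Rightarrow> real^'n \<Rightarrow> real^'n \<Rightarrow> real" where
  "opmat a b J op x y = op (extend a b J (\<lambda>z. if z = y then 1 else 0)) x"

definition Dhat0 where "Dhat0 a b J i j = opmat a b J (d2hat (hstep a b J) i j)"
definition Dtilde0 where "Dtilde0 a b J i j = opmat a b J (d2tilde (hstep a b J) i j)"
definition Dbar0 where "Dbar0 a b J i j = opmat a b J (d2bar (hstep a b J) i j)"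

definition spd_on :: "'a set \<Rightarrow> ('a \<Rightarrow> 'a \<Rightarrow> real) \<Rightarrow> bool" where
  "spd_on I M \<longleftrightarrow> (\<forall>x\<in>I. \<forall>y\<in>I. M x y = M y x) \<and>
     (\<forall>v. (\<exists>x\<in>I. v x \<noteq> 0) \<longrightarrow> (\<Sum>x\<in>I. \<Sum>y\<in>I. v x * M x y * v y) > 0)"

end

theory Submission
  imports Defs "HOL-Library.Groups_Big_Fun"
begin

definition fs :: "('a \<Rightarrow> real) \<Rightarrow> bool" where "fs f \<longleftrightarrow> finite {x. f x \<noteq> 0}"
definition Dd :: "'a::ab_group_add \<Rightarrow> ('a \<Rightarrow> real) \<Rightarrow> 'a \<Rightarrow> real" where
  "Dd e u x = u (x + e) - u x"
definition Ld :: "'a::ab_group_add \<Rightarrow> ('a \<Rightarrow> real) \<Rightarrow> 'a \<Rightarrow> real" where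
  "Ld e u x = u (x - e) - 2 * u x + u (x + e)"
definition Rr :: "'a set \<Rightarrow> ('a \<Rightarrow> real) \<Rightarrow> 'a \<Rightarrow> real" where
  "Rr I g x = (if x \<in> I then g x else 0)"

lemma supp_shift: "{x. g (x + e) \<noteq> 0} = (\<lambda>y. y - e) ` {y::'a::ab_group_add. g y \<noteq> (0::real)}"
  by (auto simp: image_iff, rule_tac x="x+e" in exI, simp)

lemma fs_shift: "fs g \<Longrightarrow> fs (\<lambda>x. g (x + (e::'a::ab_group_add)))"
  unfolding fs_def supp_shift by simp

lemma fs_shiftm: "fs g \<Longrightarrow> fs (\<lambda>x. g (x - (e::'a::ab_group_add)))"
  using fs_shift[of g "-e"] by simp

lemma fs_add: "fs f \<Longrightarrow> fs g \<Longrightarrow> fs (\<lambda>x. f x + g x)"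
  unfolding fs_def by (rule finite_subset[of _ "{x. f x \<noteq> 0} \<union> {x. g x \<noteq> 0}"]) auto

lemma fs_diff: "fs f \<Longrightarrow> fs g \<Longrightarrow> fs (\<lambda>x. f x - g x)"
  unfolding fs_def by (rule finite_subset[of _ "{x. f x \<noteq> 0} \<union> {x. g x \<noteq> 0}"]) auto

lemma fs_cmult: "fs f \<Longrightarrow> fs (\<lambda>x. c * f x)"
  unfolding fs_def by (rule finite_subset[of _ "{x. f x \<noteq> 0}"]) auto

lemma fs_Dd: "fs u \<Longrightarrow> fs (Dd e u)"
  unfolding Dd_def by (intro fs_diff fs_shift)

lemma fs_Ld: "fs u \<Longrightarrow> fs (Ld e u)"
  unfolding Ld_def by (intro fs_add fs_diff fs_shift fs_shiftm fs_cmult)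

lemma fs_Rr: "finite I \<Longrightarrow> fs (Rr I g)"
  unfolding fs_def Rr_def by (rule finite_subset[of _ I]) auto

lemma Sum_any_shift: "Sum_any (\<lambda>x. g (x + (e::'a::ab_group_add))) = Sum_any (g::'a \<Rightarrow> real)"
proof -
  have "bij (\<lambda>x::'a. x + e)" by (rule bij_betwI[of _ _ _ "\<lambda>x. x - e"]) auto
  then show ?thesis by (intro Sum_any.reindex_cong[symmetric]) (auto simp: o_def)
qed

lemma shift_zero:
  assumes "finite A" "{x. g x \<noteq> 0} \<subseteq> A" "{x. g (x + e) \<noteq> 0} \<subseteq> A"
  shows "sum (\<lambda>x. g (x + (e::'a::ab_group_add)) - (g::'a \<Rightarrow> real) x) A = 0"
proof -
  have "sum (\<lambda>x. g (x + e)) A = Sum_any (\<lambda>x. g (x + e))"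
    using assms by (simp add: Sum_any.expand_superset)
  also have "\<dots> = Sum_any g" by (rule Sum_any_shift)
  also have "\<dots> = sum g A" using assms by (simp add: Sum_any.expand_superset)
  finally show ?thesis by (simp add: sum_subtractf)
qed

lemma SBP:
  fixes u w :: "'a::ab_group_add \<Rightarrow> real"
  assumes "fs u" "fs w"
  shows "Sum_any (\<lambda>x. w x * Ld e u x) = - Sum_any (\<lambda>x. Dd e w x * Dd e u x)"
proof -
  define S where "S = {x. u x \<noteq> 0} \<union> {x. w x \<noteq> 0}"
  define A where "A = S \<union> (\<lambda>y. y - e) ` S \<union> (\<lambda>y. y + e) ` S"
  have fS: "finite S" using assms by (simp add: S_def fs_def)
  then have fA: "finite A" by (simp add: A_def)
  have mem1: "x \<in> A" if "x \<in> S" for x using that by (simp add: A_def)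
  have mem2: "x \<in> A" if "x + e \<in> S" for x
  proof -
    have "x = (x + e) - e" by simp
    then show ?thesis using that unfolding A_def by blast
  qed
  define g1 where "g1 x = w x * u (x - e)" for x
  define g2 where "g2 x = w x * u x" for x
  have wA: "{x. w x \<noteq> 0} \<subseteq> A" using mem1 by (auto simp: S_def)
  have wA2: "{x. w (x + e) \<noteq> 0} \<subseteq> A" using mem2 by (auto simp: S_def)
  have z1: "sum (\<lambda>x. g1 (x + e) - g1 x) A = 0"
    by (rule shift_zero[OF fA]) (use wA wA2 in \<open>auto simp: g1_def\<close>)
  have z2: "sum (\<lambda>x. g2 (x + e) - g2 x) A = 0"
    by (rule shift_zero[OF fA]) (use wA wA2 in \<open>auto simp: g2_def\<close>)
  have pt: "w x * Ld e u x + Dd e w x * Dd e u x = - (g1 (x + e) - g1 x) + (g2 (x + e) - g2 x)" for x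
    by (simp add: g1_def g2_def Ld_def Dd_def algebra_simps)
  have "sum (\<lambda>x. w x * Ld e u x + Dd e w x * Dd e u x) A = 0"
  proof -
    have z1': "sum (\<lambda>x. g1 x - g1 (x + e)) A = 0" using z1 by (simp add: sum_subtractf)
    show ?thesis unfolding pt by (simp add: sum.distrib z1' z2)
  qed
  then have E: "sum (\<lambda>x. w x * Ld e u x) A = - sum (\<lambda>x. Dd e w x * Dd e u x) A"
    by (simp add: sum.distrib eq_neg_iff_add_eq_0)
  have s1: "{x. w x * Ld e u x \<noteq> 0} \<subseteq> A" using wA by auto
  have s2: "{x. Dd e w x * Dd e u x \<noteq> 0} \<subseteq> A"
  proof
    fix x assume "x \<in> {x. Dd e w x * Dd e u x \<noteq> 0}"
    then have "w (x + e) \<noteq> 0 \<or> w x \<noteq> 0" by (auto simp: Dd_def)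
    then show "x \<in> A" using wA wA2 by blast
  qed
  show ?thesis using E fA s1 s2 by (simp add: Sum_any.expand_superset)
qed

lemma Sum_any_nonneg:
  fixes f :: "'a \<Rightarrow> real"
  assumes "fs f" "\<And>x. f x \<ge> 0"
  shows "Sum_any f \<ge> 0" and "Sum_any f = 0 \<Longrightarrow> f x = 0"
proof -
  have fin: "finite {x. f x \<noteq> 0}" using assms(1) by (simp add: fs_def)
  show "Sum_any f \<ge> 0" unfolding Sum_any.expand_set by (rule sum_nonneg) (use assms in auto)
  assume "Sum_any f = 0"
  then have "sum f {x. f x \<noteq> 0} = 0" unfolding Sum_any.expand_set .
  then have "\<forall>y\<in>{x. f x \<noteq> 0}. f y = 0" using sum_nonneg_eq_0_iff[OF fin] assms(2) by blast
  then show "f x = 0" by auto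
qed

lemma Dd_Ld_comm: "Dd e1 (Ld e2 w) = Ld e2 (Dd e1 w)"
  by (rule ext) (simp add: Dd_def Ld_def algebra_simps)

lemma B_off:
  fixes u w :: "'a::ab_group_add \<Rightarrow> real"
  assumes "fs u" "fs w"
  shows "Sum_any (\<lambda>x. u x * Ld e1 (Ld e2 w) x) = Sum_any (\<lambda>x. Dd e2 (Dd e1 u) x * Dd e2 (Dd e1 w) x)"
proof -
  have "Sum_any (\<lambda>x. u x * Ld e1 (Ld e2 w) x) = - Sum_any (\<lambda>x. Dd e1 u x * Dd e1 (Ld e2 w) x)"
    by (rule SBP) (use assms in \<open>auto intro: fs_Ld\<close>)
  also have "\<dots> = - Sum_any (\<lambda>x. Dd e1 u x * Ld e2 (Dd e1 w) x)" by (simp add: Dd_Ld_comm)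
  also have "Sum_any (\<lambda>x. Dd e1 u x * Ld e2 (Dd e1 w) x) = - Sum_any (\<lambda>x. Dd e2 (Dd e1 u) x * Dd e2 (Dd e1 w) x)"
    by (rule SBP) (use assms in \<open>auto intro: fs_Dd\<close>)
  finally show ?thesis by simp
qed

lemma B_diag:
  fixes u w :: "'a::ab_group_add \<Rightarrow> real"
  assumes "fs u" "fs w" "finite I" "\<And>x. x \<notin> I \<Longrightarrow> u x = 0"
  shows "Sum_any (\<lambda>x. u x * Ld e (Rr I (Ld e w)) x) = Sum_any (\<lambda>x. Rr I (Ld e u) x * Rr I (Ld e w) x)"
proof -
  have "Sum_any (\<lambda>x. u x * Ld e (Rr I (Ld e w)) x) = - Sum_any (\<lambda>x. Dd e u x * Dd e (Rr I (Ld e w)) x)"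
    by (rule SBP) (use assms in \<open>auto intro: fs_Rr\<close>)
  also have "\<dots> = Sum_any (\<lambda>x. Rr I (Ld e w) x * Ld e u x)"
    by (subst SBP) (use assms in \<open>auto intro: fs_Rr simp: mult.commute\<close>)
  also have "\<dots> = Sum_any (\<lambda>x. Rr I (Ld e u) x * Rr I (Ld e w) x)"
    by (rule Sum_any.cong) (simp add: Rr_def)
  finally show ?thesis .
qed

lemma P1:
  fixes w :: "real^'n \<Rightarrow> real"
  assumes "fs w" "c > 0" "\<And>x. Dd (c *\<^sub>R axis i 1) w x = 0"
  shows "w x = 0"
proof (rule ccontr)
  assume nz: "w x \<noteq> 0"
  define S where "S = {x. w x \<noteq> 0}"
  have fS: "finite S" using assms(1) by (simp add: fs_def S_def)
  have "x \<in> S" using nz by (simp add: S_def)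
  then have ne: "(\<lambda>y. y$i) ` S \<noteq> {}" by auto
  obtain y where yS: "y \<in> S" and ym: "y$i = Max ((\<lambda>y. y$i) ` S)"
    using Max_in[OF finite_imageI[OF fS] ne] by auto
  have "w (y + c *\<^sub>R axis i 1) = w y" using assms(3)[of y] by (simp add: Dd_def)
  then have "y + c *\<^sub>R axis i 1 \<in> S" using yS by (simp add: S_def)
  then have "(y + c *\<^sub>R axis i 1)$i \<le> Max ((\<lambda>y. y$i) ` S)"
    using fS by (intro Max_ge) (auto simp del: vector_add_component)
  then show False using ym assms(2) by simp
qed

lemma P2:
  fixes w :: "real^'n \<Rightarrow> real"
  assumes "fs w" "c > 0" "d > 0" "i \<noteq> j"
    "\<And>x. Dd (d *\<^sub>R axis j 1) (Dd (c *\<^sub>R axis i 1) w) x = 0"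
  shows "w x = 0"
proof (rule ccontr)
  assume nz: "w x \<noteq> 0"
  define S where "S = {x. w x \<noteq> 0}"
  define f where "f y = y$i + y$j" for y :: "real^'n"
  have fS: "finite S" using assms(1) by (simp add: fs_def S_def)
  have "x \<in> S" using nz by (simp add: S_def)
  then have ne: "f ` S \<noteq> {}" by auto
  obtain y where yS: "y \<in> S" and ym: "f y = Max (f ` S)"
    using Max_in[OF finite_imageI[OF fS] ne] by auto
  have out: "w z = 0" if "f z > f y" for z
  proof (rule ccontr)
    assume "w z \<noteq> 0"
    then have "f z \<le> Max (f ` S)" using fS by (intro Max_ge) (auto simp: S_def)
    then show False using that ym by simp
  qed
  have "w (y + d *\<^sub>R axis j 1 + c *\<^sub>R axis i 1) = 0"
    by (rule out) (use assms(2,3,4) in \<open>auto simp: f_def axis_def\<close>)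
  moreover have "w (y + d *\<^sub>R axis j 1) = 0"
    by (rule out) (use assms(2,3,4) in \<open>auto simp: f_def axis_def\<close>)
  moreover have "w (y + c *\<^sub>R axis i 1) = 0"
    by (rule out) (use assms(2,3,4) in \<open>auto simp: f_def axis_def\<close>)
  ultimately have "w y = 0" using assms(5)[of y] by (simp add: Dd_def)
  then show False using yS by (simp add: S_def)
qed

definition lin :: "(('a \<Rightarrow> real) \<Rightarrow> 'a \<Rightarrow> real) \<Rightarrow> bool" where
  "lin Op \<longleftrightarrow> (\<forall>(A::'a set) c g. finite A \<longrightarrow>
     Op (\<lambda>z. \<Sum>y\<in>A. c y * g y z) = (\<lambda>x. \<Sum>y\<in>A. c y * Op (g y) x))"

lemma lin_Ld: "lin (Ld e)"
  unfolding lin_def Ld_def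
  by (auto simp: fun_eq_iff sum_subtractf[symmetric] sum.distrib[symmetric] sum_distrib_left algebra_simps)

lemma lin_Rr: "lin (Rr I)"
  unfolding lin_def Rr_def by (auto simp: fun_eq_iff)

lemma lin_comp: "lin F \<Longrightarrow> lin G \<Longrightarrow> lin (\<lambda>u. F (G u))"
  unfolding lin_def by simp

lemma lin_div: "lin F \<Longrightarrow> lin (\<lambda>u x. F u x / k)"
  unfolding lin_def by (auto simp: fun_eq_iff sum_divide_distrib)



lemma E_nth: "(c *\<^sub>R axis k 1 :: real^'n) $ m = (if m = k then c else 0)"
  by (simp add: axis_def)

lemma axis_nth1: "(axis k (1::real) :: real^'n) $ m = (if m = k then 1 else 0)"
  by (simp add: axis_def)

definition Opm :: "real^'n \<Rightarrow> real^'n \<Rightarrow> ('n \<Rightarrow> nat) \<Rightarrow> 'n \<Rightarrow> 'n \<Rightarrow> (real^'n \<Rightarrow> real) \<Rightarrow> real^'n \<Rightarrow> real" where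
  "Opm a b J i j = (if i \<noteq> j then
     (\<lambda>u x. Ld (hstep a b J i *\<^sub>R axis i 1) (Ld (hstep a b J j *\<^sub>R axis j 1) u) x / (2 * hstep a b J i * hstep a b J j))
   else (\<lambda>u x. Ld (hstep a b J i *\<^sub>R axis i 1) (Rr (inodes a b J) (Ld (hstep a b J i *\<^sub>R axis i 1) u)) x / (2 * hstep a b J i ^ 2)))"

lemma Sum_any_div: "Sum_any (\<lambda>x. f x / c) = Sum_any f / (c::real)"
proof (cases "c = 0")
  case True then show ?thesis by simp
next
  case False
  then have "{x. f x / c \<noteq> 0} = {x. f x \<noteq> 0}" by auto
  then show ?thesis unfolding Sum_any.expand_set by (simp add: sum_divide_distrib)
qed

lemma spd_scale: "spd_on I M \<Longrightarrow> c > 0 \<Longrightarrow> spd_on I (\<lambda>x y. c * M x y)"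
  unfolding spd_on_def
proof (intro conjI allI impI ballI)
  fix v :: "'a \<Rightarrow> real" assume H: "(\<forall>x\<in>I. \<forall>y\<in>I. M x y = M y x) \<and> (\<forall>v. (\<exists>x\<in>I. v x \<noteq> 0) \<longrightarrow> 0 < (\<Sum>x\<in>I. \<Sum>y\<in>I. v x * M x y * v y))"
    and c: "c > 0" and e: "\<exists>x\<in>I. v x \<noteq> 0"
  have "(\<Sum>x\<in>I. \<Sum>y\<in>I. v x * (c * M x y) * v y) = c * (\<Sum>x\<in>I. \<Sum>y\<in>I. v x * M x y * v y)"
    by (simp add: sum_distrib_left algebra_simps)
  then show "0 < (\<Sum>x\<in>I. \<Sum>y\<in>I. v x * (c * M x y) * v y)" using H e c by simp
qed auto

locale grid =
  fixes a b :: "real^'n" and J :: "'n \<Rightarrow> nat"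
  assumes ab: "\<And>i. a$i < b$i" and J2: "\<And>i. J i \<ge> 2"
begin

abbreviation E :: "'n \<Rightarrow> real^'n" where "E k \<equiv> hstep a b J k *\<^sub>R axis k 1"
abbreviation I where "I \<equiv> inodes a b J"

lemma hpos: "hstep a b J k > 0"
  using ab[of k] J2[of k] by (simp add: hstep_def)

lemma bh: "b$k = a$k + (real (J k) - 1) * hstep a b J k"
  using J2[of k] by (simp add: hstep_def)

lemma finite_mesh: "finite (mesh a b J)"
proof -
  have eq: "mesh a b J = node a b J ` {\<alpha>. \<forall>i. 1 \<le> \<alpha> i \<and> \<alpha> i \<le> J i}"
    by (auto simp: mesh_def)
  have sub: "{\<alpha>. \<forall>i. 1 \<le> \<alpha> i \<and> \<alpha> i \<le> J i} \<subseteq> PiE UNIV (\<lambda>i. {..J i})"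
    by (auto simp: PiE_UNIV_domain)
  have "finite (PiE UNIV (\<lambda>i. {..J i}))" by (rule finite_PiE) auto
  then have "finite {\<alpha>. \<forall>i. 1 \<le> \<alpha> i \<and> \<alpha> i \<le> J i}" by (rule finite_subset[OF sub])
  then show ?thesis unfolding eq by (rule finite_imageI)
qed

lemma finite_I: "finite I"
  using finite_mesh by (simp add: inodes_def)

lemma I_box: "p \<in> I \<Longrightarrow> a$k < p$k \<and> p$k < b$k"
  by (simp add: inodes_def mem_box_cart)

lemma mesh_cbox: "p \<in> mesh a b J \<Longrightarrow> a$k \<le> p$k \<and> p$k \<le> b$k"
proof -
  assume "p \<in> mesh a b J"
  then obtain \<alpha> where p: "p = node a b J \<alpha>" and r: "\<forall>i. 1 \<le> \<alpha> i \<and> \<alpha> i \<le> J i"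
    by (auto simp: mesh_def)
  have h: "hstep a b J k > 0" by (rule hpos)
  have "real (\<alpha> k) - 1 \<ge> 0" "real (\<alpha> k) - 1 \<le> real (J k) - 1" using r[rule_format, of k] by auto
  then have "0 \<le> (real (\<alpha> k) - 1) * hstep a b J k" "(real (\<alpha> k) - 1) * hstep a b J k \<le> (real (J k) - 1) * hstep a b J k"
    using h by (auto intro: mult_right_mono)
  then show ?thesis using bh[of k] by (simp add: p node_def)
qed

lemma inodes_node:
  assumes "x \<in> I"
  obtains \<alpha> where "x = node a b J \<alpha>" "\<And>k. 2 \<le> \<alpha> k \<and> \<alpha> k + 1 \<le> J k"
proof -
  from assms obtain \<alpha> where x: "x = node a b J \<alpha>" and r: "\<forall>i. 1 \<le> \<alpha> i \<and> \<alpha> i \<le> J i"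
    by (auto simp: inodes_def mesh_def)
  have "2 \<le> \<alpha> k \<and> \<alpha> k + 1 \<le> J k" for k
  proof -
    have h: "hstep a b J k > 0" by (rule hpos)
    have "a$k < x$k" "x$k < b$k" using I_box[OF assms] by auto
    then have 1: "0 < (real (\<alpha> k) - 1) * hstep a b J k" and
      2: "(real (\<alpha> k) - 1) * hstep a b J k < (real (J k) - 1) * hstep a b J k"
      using bh[of k] by (auto simp: x node_def)
    from 1 h have "real (\<alpha> k) > 1" by (simp add: zero_less_mult_iff)
    moreover from 2 h have "real (\<alpha> k) < real (J k)" by simp
    ultimately show ?thesis by linarith
  qed
  then show ?thesis using that x by blast
qed

lemma mesh_offset:
  assumes "x \<in> I" "\<And>k. c$k = 0 \<or> c$k = hstep a b J k \<or> c$k = - hstep a b J k"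
  shows "x + c \<in> mesh a b J"
proof -
  obtain \<alpha> where x: "x = node a b J \<alpha>" and r: "\<And>k. 2 \<le> \<alpha> k \<and> \<alpha> k + 1 \<le> J k"
    using inodes_node[OF assms(1)] by blast
  define \<beta> where "\<beta> k = (if c$k = hstep a b J k then \<alpha> k + 1 else if c$k = - hstep a b J k then \<alpha> k - 1 else \<alpha> k)" for k
  have "(x + c)$k = node a b J \<beta> $ k" for k
  proof -
    have h: "hstep a b J k > 0" by (rule hpos)
    have r2: "2 \<le> \<alpha> k" using r[of k] by simp
    have ne: "hstep a b J k \<noteq> - hstep a b J k" using h by simp
    have nx: "(x + c)$k = a$k + (real (\<alpha> k) - 1) * hstep a b J k + c$k" by (simp add: x node_def)
    have nb: "node a b J \<beta> $ k = a$k + (real (\<beta> k) - 1) * hstep a b J k" by (simp add: node_def)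
    consider "c$k = 0" | "c$k = hstep a b J k" | "c$k = - hstep a b J k" using assms(2)[of k] by blast
    then show ?thesis
    proof cases
      case 1 then have "\<beta> k = \<alpha> k" using h by (simp add: \<beta>_def)
      then show ?thesis using 1 nx nb by simp
    next
      case 2 then have "\<beta> k = \<alpha> k + 1" by (simp add: \<beta>_def)
      then show ?thesis using 2 nx nb by (simp add: algebra_simps)
    next
      case 3 then have "\<beta> k = \<alpha> k - 1" using ne by (simp add: \<beta>_def)
      then have e: "real (\<alpha> k) = real (\<beta> k) + 1" using r2 by (simp add: of_nat_diff)
      show ?thesis unfolding nx nb 3 e by (simp add: algebra_simps)
    qed
  qed
  then have "x + c = node a b J \<beta>" by (simp add: vec_eq_iff)
  moreover have "1 \<le> \<beta> k \<and> \<beta> k \<le> J k" for k using r[of k] by (auto simp: \<beta>_def)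
  ultimately show ?thesis by (auto simp: mesh_def)
qed

lemma box_ne: "box a b \<noteq> {}"
proof -
  have "(1/2) *\<^sub>R (a + b) \<in> box a b" using ab by (auto simp: mem_box_cart)
  then show ?thesis by blast
qed

lemma bnd: "p \<in> mesh a b J \<Longrightarrow> p \<notin> box a b \<Longrightarrow> p \<in> mesh a b J \<inter> frontier (box a b)"
proof -
  assume m: "p \<in> mesh a b J" and nb: "p \<notin> box a b"
  have "p \<in> cbox a b" using mesh_cbox[OF m] by (simp add: mem_box_cart(2))
  then have "p \<in> frontier (box a b)" using nb box_ne by (simp add: frontier_box)
  then show ?thesis using m by simp
qed

lemma frontier_not_box: "p \<in> frontier (box a b) \<Longrightarrow> p \<notin> box a b"
  using box_ne by (simp add: frontier_box)

lemma VW: "ghost_ext a b J v V \<Longrightarrow> p \<in> mesh a b J \<Longrightarrow> V p = Rr I v p"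
proof -
  assume g: "ghost_ext a b J v V" and m: "p \<in> mesh a b J"
  show ?thesis
  proof (cases "p \<in> I")
    case True then show ?thesis using g by (simp add: ghost_ext_def Rr_def)
  next
    case False
    then have "p \<notin> box a b" using m by (simp add: inodes_def)
    then have "p \<in> mesh a b J \<inter> frontier (box a b)" using bnd m by blast
    then show ?thesis using g False by (simp add: ghost_ext_def Rr_def)
  qed
qed

lemma Rr_out: "q$i \<le> a$i \<or> q$i \<ge> b$i \<Longrightarrow> Rr I v q = 0"
  using I_box[of q i] by (auto simp: Rr_def)

lemma z_out:
  assumes "x \<in> I" "\<And>m. m \<noteq> i \<Longrightarrow> c$m = 0" "x + c \<notin> box a b"
  shows "\<not> (a$i < (x + c)$i \<and> (x + c)$i < b$i)"
proof
  assume H: "a$i < (x + c)$i \<and> (x + c)$i < b$i"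
  have "\<forall>m. a$m < (x + c)$m \<and> (x + c)$m < b$m"
  proof
    fix m show "a$m < (x + c)$m \<and> (x + c)$m < b$m"
      using H I_box[OF assms(1), of m] assms(2)[of m] by (cases "m = i") auto
  qed
  then show False using assms(3) by (simp add: mem_box_cart)
qed

lemma offE:
  assumes "c = E i \<or> c = - E i"
  shows "c$m = 0 \<or> c$m = hstep a b J m \<or> c$m = - hstep a b J m"
    and "k \<noteq> i \<Longrightarrow> (c + E k)$m = 0 \<or> (c + E k)$m = hstep a b J m \<or> (c + E k)$m = - hstep a b J m"
    and "k \<noteq> i \<Longrightarrow> (c - E k)$m = 0 \<or> (c - E k)$m = hstep a b J m \<or> (c - E k)$m = - hstep a b J m"
    and "m \<noteq> i \<Longrightarrow> c$m = 0"
  using assms by (auto simp: axis_nth1)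

lemma lap_red:
  assumes V0: "\<forall>p\<in>mesh a b J \<inter> frontier (box a b). V p = 0" and x: "x \<in> I"
    and c: "c = E i \<or> c = - E i" and nb: "x + c \<notin> box a b"
  shows "lap_h (hstep a b J) V (x + c) = (V (x + c - E i) + V (x + c + E i)) / hstep a b J i ^ 2"
proof -
  define z where "z = x + c"
  have zi: "\<not> (a$i < z$i \<and> z$i < b$i)" unfolding z_def
    by (rule z_out[OF x _ nb]) (use offE(4)[OF c] in auto)
  have zm: "z \<in> mesh a b J" unfolding z_def by (rule mesh_offset[OF x offE(1)[OF c]])
  have Vz: "V z = 0" using V0 bnd[OF zm] nb by (simp add: z_def)
  have d0: "d2 (hstep a b J) k V z = 0" if "k \<noteq> i" for k
  proof -
    have "z + E k = x + (c + E k)" by (simp add: z_def algebra_simps)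
    then have m1: "z + E k \<in> mesh a b J" using mesh_offset[OF x] offE(2)[OF c that] by metis
    have "z - E k = x + (c - E k)" by (simp add: z_def algebra_simps)
    then have m2: "z - E k \<in> mesh a b J" using mesh_offset[OF x] offE(3)[OF c that] by metis
    have n1: "z + E k \<notin> box a b" using zi that by (auto simp: mem_box_cart axis_nth1)
    have n2: "z - E k \<notin> box a b" using zi that by (auto simp: mem_box_cart axis_nth1)
    have "V (z + E k) = 0" using V0 bnd[OF m1 n1] by blast
    moreover have "V (z - E k) = 0" using V0 bnd[OF m2 n2] by blast
    ultimately show ?thesis by (simp add: d2_def Vz)
  qed
  have "lap_h (hstep a b J) V z = (\<Sum>k\<in>UNIV. if k = i then d2 (hstep a b J) i V z else 0)"
    unfolding lap_h_def by (rule sum.cong) (auto simp: d0)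
  also have "\<dots> = d2 (hstep a b J) i V z" by simp
  finally show ?thesis using Vz by (simp add: d2_def z_def)
qed

lemma ghost_val:
  assumes g: "ghost_ext a b J v V" and x: "x \<in> I" and n: "x + E i \<notin> I"
  shows "V (x + E i + E i) = - v x"
proof -
  have m: "x + E i \<in> mesh a b J" by (rule mesh_offset[OF x offE(1)]) auto
  then have nb: "x + E i \<notin> box a b" using n by (simp add: inodes_def)
  have "x + E i \<in> Snodes a b J"
    unfolding Snodes_def using bnd[OF m nb] x by (auto intro!: exI[of _ i])
  then have "lap_h (hstep a b J) V (x + E i) = 0" using g by (simp add: ghost_ext_def)
  moreover have "lap_h (hstep a b J) V (x + E i) = (V (x + E i - E i) + V (x + E i + E i)) / hstep a b J i ^ 2"
    by (rule lap_red[OF _ x _ nb]) (use g in \<open>auto simp: ghost_ext_def\<close>)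
  ultimately have "V x + V (x + E i + E i) = 0" using hpos[of i] by simp
  then show ?thesis using g x by (simp add: ghost_ext_def)
qed

lemma ghost_valm:
  assumes g: "ghost_ext a b J v V" and x: "x \<in> I" and n: "x - E i \<notin> I"
  shows "V (x - E i - E i) = - v x"
proof -
  have m: "x + - E i \<in> mesh a b J" by (rule mesh_offset[OF x offE(1)]) auto
  then have nb: "x + - E i \<notin> box a b" using n by (simp add: inodes_def)
  have "x - E i \<in> Snodes a b J"
    unfolding Snodes_def using bnd[OF m nb] x by (auto intro!: exI[of _ i])
  then have "lap_h (hstep a b J) V (x - E i) = 0" using g by (simp add: ghost_ext_def)
  moreover have "lap_h (hstep a b J) V (x + - E i) = (V (x + - E i - E i) + V (x + - E i + E i)) / hstep a b J i ^ 2"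
    by (rule lap_red[OF _ x _ nb]) (use g in \<open>auto simp: ghost_ext_def\<close>)
  ultimately have "V (x - E i - E i) + V x = 0" using hpos[of i] by simp
  then show ?thesis using g x by (simp add: ghost_ext_def)
qed

lemma ghost_exists: "\<exists>V. ghost_ext a b J v V"
proof -
  define W where "W = Rr I v"
  define V where "V p = (if p \<in> mesh a b J then W p
     else - (\<Sum>k\<in>UNIV. W (p - 2 *\<^sub>R E k) + W (p + 2 *\<^sub>R E k)))" for p
  have c1: "\<forall>x\<in>I. V x = v x" by (auto simp: V_def W_def Rr_def inodes_def)
  have c2: "\<forall>p\<in>mesh a b J \<inter> frontier (box a b). V p = 0"
    using frontier_not_box by (auto simp: V_def W_def Rr_def inodes_def)
  have c3: "lap_h (hstep a b J) V z = 0" if z: "z \<in> Snodes a b J" for z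
  proof -
    have zm: "z \<in> mesh a b J" and zf: "z \<in> frontier (box a b)" using z by (auto simp: Snodes_def)
    have nb: "z \<notin> box a b" using frontier_not_box[OF zf] .
    obtain i where "z + E i \<in> I \<or> z - E i \<in> I" using z by (auto simp: Snodes_def)
    then consider "z - E i \<in> I" | "z + E i \<in> I" by blast
    then show ?thesis
    proof cases
      case 1
      define x where "x = z - E i"
      have x: "x \<in> I" using 1 by (simp add: x_def)
      have zx: "z = x + E i" by (simp add: x_def)
      have lap: "lap_h (hstep a b J) V z = (V (z - E i) + V (z + E i)) / hstep a b J i ^ 2"
        unfolding zx by (rule lap_red[OF c2 x]) (use nb zx in auto)
      have zi: "\<not> (a$i < z$i \<and> z$i < b$i)" unfolding zx
        by (rule z_out[OF x]) (use nb zx in \<open>auto simp: axis_nth1\<close>)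
      have "z$i = x$i + hstep a b J i" by (simp add: zx axis_nth1)
      then have zb: "z$i \<ge> b$i" using zi I_box[OF x, of i] hpos[of i] by linarith
      have h: "hstep a b J i > 0" by (rule hpos)
      have nm: "z + E i \<notin> mesh a b J" using mesh_cbox[of "z + E i" i] zb h by (auto simp: axis_nth1)
      have terms: "W (z + E i - 2 *\<^sub>R E k) + W (z + E i + 2 *\<^sub>R E k) = (if k = i then v x else 0)" for k
      proof -
        have "W (z + E i + 2 *\<^sub>R E k) = 0" unfolding W_def
          by (rule Rr_out[of _ i]) (use zb h hpos[of k] in \<open>auto simp: axis_nth1\<close>)
        moreover have "W (z + E i - 2 *\<^sub>R E k) = (if k = i then v x else 0)"
        proof (cases "k = i")
          case True
          have "z + E i - 2 *\<^sub>R E k = x" using True by (simp add: zx vec_eq_iff axis_nth1)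
          then show ?thesis using True x by (simp add: W_def Rr_def)
        next
          case False
          have "W (z + E i - 2 *\<^sub>R E k) = 0" unfolding W_def
            by (rule Rr_out[of _ i], rule disjI2) (use zb h False in \<open>auto simp: axis_nth1\<close>)
          then show ?thesis using False by simp
        qed
        ultimately show ?thesis by simp
      qed
      have "V (z + E i) = - (\<Sum>k\<in>UNIV. if k = i then v x else 0)"
        by (simp only: V_def nm terms if_False)
      then have "V (z + E i) = - v x" by simp
      moreover have "V (z - E i) = v x" using c1 x by (simp add: x_def)
      ultimately show ?thesis using lap by simp
    next
      case 2
      define x where "x = z + E i"
      have x: "x \<in> I" using 2 by (simp add: x_def)
      have zx: "z = x + - E i" by (simp add: x_def)
      have lap: "lap_h (hstep a b J) V z = (V (z - E i) + V (z + E i)) / hstep a b J i ^ 2"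
        unfolding zx by (rule lap_red[OF c2 x]) (use nb zx in auto)
      have zi: "\<not> (a$i < z$i \<and> z$i < b$i)" unfolding zx
        by (rule z_out[OF x]) (use nb zx in \<open>auto simp: axis_nth1\<close>)
      have "z$i = x$i - hstep a b J i" by (simp add: zx axis_nth1)
      then have za: "z$i \<le> a$i" using zi I_box[OF x, of i] hpos[of i] by linarith
      have h: "hstep a b J i > 0" by (rule hpos)
      have nm: "z - E i \<notin> mesh a b J" using mesh_cbox[of "z - E i" i] za h by (auto simp: axis_nth1)
      have terms: "W (z - E i - 2 *\<^sub>R E k) + W (z - E i + 2 *\<^sub>R E k) = (if k = i then v x else 0)" for k
      proof -
        have "W (z - E i - 2 *\<^sub>R E k) = 0" unfolding W_def
          by (rule Rr_out[of _ i]) (use za h hpos[of k] in \<open>auto simp: axis_nth1\<close>)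
        moreover have "W (z - E i + 2 *\<^sub>R E k) = (if k = i then v x else 0)"
        proof (cases "k = i")
          case True
          have "z - E i + 2 *\<^sub>R E k = x" using True by (simp add: zx vec_eq_iff axis_nth1)
          then show ?thesis using True x by (simp add: W_def Rr_def)
        next
          case False
          have "W (z - E i + 2 *\<^sub>R E k) = 0" unfolding W_def
            by (rule Rr_out[of _ i], rule disjI1) (use za h False in \<open>auto simp: axis_nth1\<close>)
          then show ?thesis using False by simp
        qed
        ultimately show ?thesis by simp
      qed
      have "V (z - E i) = - (\<Sum>k\<in>UNIV. if k = i then v x else 0)"
        by (simp only: V_def nm terms if_False)
      then have "V (z - E i) = - v x" by simp
      moreover have "V (z + E i) = v x" using c1 x by (simp add: x_def)
      ultimately show ?thesis using lap by simp
    qed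
  qed
  have "ghost_ext a b J v V" unfolding ghost_ext_def using c1 c2 c3 by blast
  then show ?thesis by blast
qed

lemma VWo:
  assumes g: "ghost_ext a b J v V" and x: "x \<in> I"
    and c: "\<And>m. c$m = 0 \<or> c$m = hstep a b J m \<or> c$m = - hstep a b J m" and p: "p = x + c"
  shows "V p = Rr I v p"
  using VW[OF g] mesh_offset[OF x c] p by simp

lemma K1_off:
  assumes g: "ghost_ext a b J v V" and x: "x \<in> I" and ij: "i \<noteq> j"
  shows "d2tilde (hstep a b J) i j V x - d2hat (hstep a b J) i j V x
     = Ld (E i) (Ld (E j) (Rr I v)) x / (2 * hstep a b J i * hstep a b J j)"
proof -
  define W where "W = Rr I v"
  have hi: "hstep a b J i \<noteq> 0" and hj: "hstep a b J j \<noteq> 0" using hpos by (auto simp: less_le)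
  note VWo' = VWo[OF g x, folded W_def]
  have f1: "V (x + E j + E i) = W (x + E i + E j)"
    by (subst VWo'[of "E i + E j"]) (use ij in \<open>auto simp: axis_nth1 algebra_simps\<close>)
  have f2: "V (x + E j) = W (x + E j)"
    by (rule VWo'[of "E j"]) (use ij in \<open>auto simp: axis_nth1 algebra_simps\<close>)
  have f3: "V (x + E i) = W (x + E i)"
    by (rule VWo'[of "E i"]) (use ij in \<open>auto simp: axis_nth1 algebra_simps\<close>)
  have f4: "V x = W x"
    by (rule VWo'[of "0"]) (use ij in \<open>auto simp: axis_nth1 algebra_simps\<close>)
  have f5: "V (x - E i) = W (x - E i)"
    by (rule VWo'[of "- E i"]) (use ij in \<open>auto simp: axis_nth1 algebra_simps\<close>)
  have f6: "V (x - E j) = W (x - E j)"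
    by (rule VWo'[of "- E j"]) (use ij in \<open>auto simp: axis_nth1 algebra_simps\<close>)
  have f7: "V (x - E j - E i) = W (x - E i - E j)"
    by (subst VWo'[of "- E i - E j"]) (use ij in \<open>auto simp: axis_nth1 algebra_simps\<close>)
  have f8: "V (x - E j + E i) = W (x + E i - E j)"
    by (subst VWo'[of "E i - E j"]) (use ij in \<open>auto simp: axis_nth1 algebra_simps\<close>)
  have f9: "V (x + E j - E i) = W (x - E i + E j)"
    by (subst VWo'[of "E j - E i"]) (use ij in \<open>auto simp: axis_nth1 algebra_simps\<close>)
  show ?thesis
    unfolding W_def[symmetric] d2tilde_def d2hat_def dp_def dm_def Ld_def
    unfolding f1 f2 f3 f4 f5 f6 f7 f8 f9
    using hi hj by (simp add: field_simps) (simp add: algebra_simps)?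
qed

lemma K1_diag:
  assumes g: "ghost_ext a b J v V" and x: "x \<in> I"
  shows "d2tilde (hstep a b J) i i V x - d2hat (hstep a b J) i i V x
     = Ld (E i) (Rr I (Ld (E i) (Rr I v))) x / (2 * hstep a b J i ^ 2)"
proof -
  define W where "W = Rr I v"
  have hi: "hstep a b J i \<noteq> 0" using hpos by (auto simp: less_le)
  note VWo' = VWo[OF g x, folded W_def]
  have f3: "V (x + E i) = W (x + E i)"
    by (rule VWo'[of "E i"]) (auto simp: axis_nth1 algebra_simps)
  have f4: "V x = W x"
    by (rule VWo'[of "0"]) (auto simp: axis_nth1 algebra_simps)
  have f5: "V (x - E i) = W (x - E i)"
    by (rule VWo'[of "- E i"]) (auto simp: axis_nth1 algebra_simps)
  have Wx: "W x = v x" using x by (simp add: W_def Rr_def)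
  have fp: "V (x + E i + E i) = (if x + E i \<in> I then W (x + E i + E i) else - W x)"
  proof (cases "x + E i \<in> I")
    case True
    then show ?thesis using VWo[OF g True, of "E i" "x + E i + E i", folded W_def]
      by (auto simp: axis_nth1)
  next
    case False then show ?thesis using ghost_val[OF g x False] Wx by simp
  qed
  have fm: "V (x - E i - E i) = (if x - E i \<in> I then W (x - E i - E i) else - W x)"
  proof (cases "x - E i \<in> I")
    case True
    then show ?thesis using VWo[OF g True, of "- E i" "x - E i - E i", folded W_def]
      by (auto simp: axis_nth1)
  next
    case False then show ?thesis using ghost_valm[OF g x False] Wx by simp
  qed
  define A0 where "A0 = W x"
  define A1 where "A1 = W (x + E i)"
  define A2 where "A2 = W (x + E i + E i)"
  define B1 where "B1 = W (x - E i)"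
  define B2 where "B2 = W (x - E i - E i)"
  have wp: "x + E i \<notin> I \<Longrightarrow> A1 = 0" by (simp add: A1_def W_def Rr_def)
  have wm: "x - E i \<notin> I \<Longrightarrow> B1 = 0" by (simp add: B1_def W_def Rr_def)
  show ?thesis
    unfolding W_def[symmetric] d2tilde_def d2hat_def dp_def dm_def Ld_def Rr_def
    unfolding f3 f4 f5 fp fm diff_add_cancel add_diff_cancel
    unfolding A0_def[symmetric] A1_def[symmetric] A2_def[symmetric] B1_def[symmetric] B2_def[symmetric]
    using hi x wp wm by (cases "x + E i \<in> I"; cases "x - E i \<in> I") (simp_all add: field_simps power2_eq_square)
qed

lemma K1:
  assumes g: "ghost_ext a b J v V" and x: "x \<in> I"
  shows "d2tilde (hstep a b J) i j V x - d2hat (hstep a b J) i j V x = Opm a b J i j (Rr I v) x"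
  using K1_off[OF g x] K1_diag[OF g x] by (cases "i = j") (auto simp: Opm_def)

lemma lin_Opm: "lin (Opm a b J i j)"
proof (cases "i = j")
  case True
  have l: "lin (\<lambda>u. Ld (E i) (Rr I (Ld (E i) u)))" by (rule lin_comp[OF lin_Ld lin_comp[OF lin_Rr lin_Ld]])
  show ?thesis using lin_div[OF l] True by (simp add: Opm_def)
next
  case False
  have l: "lin (\<lambda>u. Ld (E i) (Ld (E j) u))" by (rule lin_comp[OF lin_Ld lin_Ld])
  show ?thesis using lin_div[OF l] False by (simp add: Opm_def)
qed

lemma Bsym:
  assumes "fs u" "fs w" "\<And>x. x \<notin> I \<Longrightarrow> u x = 0" "\<And>x. x \<notin> I \<Longrightarrow> w x = 0"
  shows "Sum_any (\<lambda>x. u x * Opm a b J i j w x) = Sum_any (\<lambda>x. w x * Opm a b J i j u x)"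
proof (cases "i = j")
  case True
  have "Sum_any (\<lambda>x. u x * Opm a b J i j w x) = Sum_any (\<lambda>x. u x * Ld (E i) (Rr I (Ld (E i) w)) x) / (2 * hstep a b J i ^ 2)"
    using True by (simp add: Opm_def Sum_any_div[symmetric])
  also have "\<dots> = Sum_any (\<lambda>x. Rr I (Ld (E i) u) x * Rr I (Ld (E i) w) x) / (2 * hstep a b J i ^ 2)"
    using B_diag[OF assms(1,2) finite_I] assms(3) by simp
  also have "\<dots> = Sum_any (\<lambda>x. w x * Ld (E i) (Rr I (Ld (E i) u)) x) / (2 * hstep a b J i ^ 2)"
    using B_diag[OF assms(2,1) finite_I] assms(4) by (simp add: mult.commute)
  also have "\<dots> = Sum_any (\<lambda>x. w x * Opm a b J i j u x)"
    using True by (simp add: Opm_def Sum_any_div[symmetric])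
  finally show ?thesis .
next
  case False
  have "Sum_any (\<lambda>x. u x * Opm a b J i j w x) = Sum_any (\<lambda>x. u x * Ld (E i) (Ld (E j) w) x) / (2 * hstep a b J i * hstep a b J j)"
    using False by (simp add: Opm_def Sum_any_div[symmetric])
  also have "\<dots> = Sum_any (\<lambda>x. Dd (E j) (Dd (E i) u) x * Dd (E j) (Dd (E i) w) x) / (2 * hstep a b J i * hstep a b J j)"
    using B_off[OF assms(1,2)] by simp
  also have "\<dots> = Sum_any (\<lambda>x. w x * Ld (E i) (Ld (E j) u) x) / (2 * hstep a b J i * hstep a b J j)"
    using B_off[OF assms(2,1)] by (simp add: mult.commute)
  also have "\<dots> = Sum_any (\<lambda>x. w x * Opm a b J i j u x)"
    using False by (simp add: Opm_def Sum_any_div[symmetric])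
  finally show ?thesis .
qed

lemma Bpos:
  assumes w: "fs w" and wI: "\<And>x. x \<notin> I \<Longrightarrow> w x = 0" and y: "w y \<noteq> 0"
  shows "Sum_any (\<lambda>x. w x * Opm a b J i j w x) > 0"
proof (cases "i = j")
  case True
  define F where "F x = Rr I (Ld (E i) w) x * Rr I (Ld (E i) w) x" for x
  have fF: "fs F" unfolding F_def using fs_Rr[OF finite_I] unfolding fs_def
    by (rule finite_subset[rotated]) auto
  have "Sum_any (\<lambda>x. w x * Opm a b J i j w x) = Sum_any (\<lambda>x. w x * Ld (E i) (Rr I (Ld (E i) w)) x) / (2 * hstep a b J i ^ 2)"
    using True by (simp add: Opm_def Sum_any_div[symmetric])
  also have "\<dots> = Sum_any F / (2 * hstep a b J i ^ 2)"
    using B_diag[OF w w finite_I wI] by (simp add: F_def)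
  finally have eq: "Sum_any (\<lambda>x. w x * Opm a b J i j w x) = Sum_any F / (2 * hstep a b J i ^ 2)" .
  have ge: "Sum_any F \<ge> 0" by (rule Sum_any_nonneg(1)[OF fF]) (simp add: F_def)
  have "Sum_any F \<noteq> 0"
  proof
    assume z: "Sum_any F = 0"
    have R0: "Rr I (Ld (E i) w) x = 0" for x
      using Sum_any_nonneg(2)[OF fF _ z, of x] by (simp add: F_def)
    have "Sum_any (\<lambda>x. w x * Ld (E i) w x) = Sum_any (\<lambda>x. w x * Rr I (Ld (E i) w) x)"
      by (rule Sum_any.cong) (use wI in \<open>auto simp: Rr_def\<close>)
    also have "\<dots> = 0" by (simp add: R0)
    finally have "- Sum_any (\<lambda>x. Dd (E i) w x * Dd (E i) w x) = 0" using SBP[OF w w, of "E i"] by simp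
    then have z2: "Sum_any (\<lambda>x. Dd (E i) w x * Dd (E i) w x) = 0" by simp
    have "Dd (E i) w x = 0" for x
      using Sum_any_nonneg(2)[OF _ _ z2, of x] fs_Dd[OF w] unfolding fs_def
      by (simp add: finite_subset[rotated])
    then have "w y = 0" by (intro P1[OF w hpos[of i]])
    then show False using y by simp
  qed
  then show ?thesis using eq ge hpos[of i] by simp
next
  case False
  define F where "F x = Dd (E j) (Dd (E i) w) x * Dd (E j) (Dd (E i) w) x" for x
  have fD: "fs (Dd (E j) (Dd (E i) w))" by (intro fs_Dd w)
  have fF: "fs F" unfolding F_def using fD unfolding fs_def
    by (rule finite_subset[rotated]) auto
  have "Sum_any (\<lambda>x. w x * Opm a b J i j w x) = Sum_any (\<lambda>x. w x * Ld (E i) (Ld (E j) w) x) / (2 * hstep a b J i * hstep a b J j)"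
    using False by (simp add: Opm_def Sum_any_div[symmetric])
  also have "\<dots> = Sum_any F / (2 * hstep a b J i * hstep a b J j)"
    using B_off[OF w w] by (simp add: F_def)
  finally have eq: "Sum_any (\<lambda>x. w x * Opm a b J i j w x) = Sum_any F / (2 * hstep a b J i * hstep a b J j)" .
  have ge: "Sum_any F \<ge> 0" by (rule Sum_any_nonneg(1)[OF fF]) (simp add: F_def)
  have "Sum_any F \<noteq> 0"
  proof
    assume z: "Sum_any F = 0"
    have "Dd (E j) (Dd (E i) w) x = 0" for x
      using Sum_any_nonneg(2)[OF fF _ z, of x] by (simp add: F_def)
    then have "w y = 0" by (intro P2[OF w hpos[of i] hpos[of j] False])
    then show False using y by simp
  qed
  then show ?thesis using eq ge hpos[of i] hpos[of j] by simp
qed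

lemma spd_main: "spd_on I (\<lambda>x y. Dtilde0 a b J i j x y - Dhat0 a b J i j x y)"
proof -
  define \<delta> where "\<delta> y = (\<lambda>z::real^'n. if z = y then (1::real) else 0)" for y
  have ge: "ghost_ext a b J (\<delta> y) (extend a b J (\<delta> y))" for y
    unfolding extend_def by (rule someI_ex[OF ghost_exists])
  have Rd: "Rr I (\<delta> y) = \<delta> y" if "y \<in> I" for y
    using that by (auto simp: Rr_def \<delta>_def fun_eq_iff)
  have Q: "Dtilde0 a b J i j x y - Dhat0 a b J i j x y = Opm a b J i j (\<delta> y) x" if x: "x \<in> I" and y: "y \<in> I" for x y
  proof -
    have "Dtilde0 a b J i j x y - Dhat0 a b J i j x y
        = d2tilde (hstep a b J) i j (extend a b J (\<delta> y)) x - d2hat (hstep a b J) i j (extend a b J (\<delta> y)) x"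
      by (simp add: Dtilde0_def Dhat0_def opmat_def \<delta>_def)
    also have "\<dots> = Opm a b J i j (\<delta> y) x" using K1[OF ge x] Rd[OF y] by simp
    finally show ?thesis .
  qed
  have fsd: "fs (\<delta> y)" for y
    unfolding fs_def by (rule finite_subset[of _ "{y}"]) (auto simp: \<delta>_def)
  have dI: "\<delta> y z = 0" if "y \<in> I" "z \<notin> I" for y z using that by (auto simp: \<delta>_def)
  have ev: "Opm a b J i j w x = Sum_any (\<lambda>z. \<delta> x z * Opm a b J i j w z)" for w x
    by (subst Sum_any.expand_superset[of "{x}"]) (auto simp: \<delta>_def)
  have sym: "\<forall>x\<in>I. \<forall>y\<in>I. Dtilde0 a b J i j x y - Dhat0 a b J i j x y = Dtilde0 a b J i j y x - Dhat0 a b J i j y x"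
  proof (intro ballI)
    fix x y assume x: "x \<in> I" and y: "y \<in> I"
    have "Opm a b J i j (\<delta> y) x = Opm a b J i j (\<delta> x) y"
      using Bsym[OF fsd fsd, of x y] dI x y ev by metis
    then show "Dtilde0 a b J i j x y - Dhat0 a b J i j x y = Dtilde0 a b J i j y x - Dhat0 a b J i j y x"
      using Q x y by simp
  qed
  have pos: "0 < (\<Sum>x\<in>I. \<Sum>y\<in>I. v x * (Dtilde0 a b J i j x y - Dhat0 a b J i j x y) * v y)"
    if e: "\<exists>x\<in>I. v x \<noteq> 0" for v
  proof -
    have lin: "Opm a b J i j (\<lambda>z. \<Sum>y\<in>I. v y * \<delta> y z) = (\<lambda>x. \<Sum>y\<in>I. v y * Opm a b J i j (\<delta> y) x)"
      using lin_Opm finite_I unfolding lin_def by blast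
    have RV: "(\<lambda>z. \<Sum>y\<in>I. v y * \<delta> y z) = Rr I v"
    proof
      fix z
      have "(\<Sum>y\<in>I. v y * \<delta> y z) = (\<Sum>y\<in>I. if y = z then v z else 0)"
        by (rule sum.cong) (auto simp: \<delta>_def)
      then show "(\<Sum>y\<in>I. v y * \<delta> y z) = Rr I v z" using finite_I by (simp add: Rr_def)
    qed
    have "(\<Sum>x\<in>I. \<Sum>y\<in>I. v x * (Dtilde0 a b J i j x y - Dhat0 a b J i j x y) * v y)
        = (\<Sum>x\<in>I. v x * (\<Sum>y\<in>I. v y * Opm a b J i j (\<delta> y) x))"
      by (rule sum.cong) (auto simp: Q sum_distrib_left algebra_simps intro!: sum.cong)
    also have "\<dots> = (\<Sum>x\<in>I. v x * Opm a b J i j (Rr I v) x)"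
      using lin RV by (metis (no_types, lifting))
    also have "\<dots> = (\<Sum>x\<in>I. Rr I v x * Opm a b J i j (Rr I v) x)"
      by (rule sum.cong) (auto simp: Rr_def)
    also have "\<dots> = Sum_any (\<lambda>x. Rr I v x * Opm a b J i j (Rr I v) x)"
      by (rule Sum_any.expand_superset[symmetric]) (auto simp: finite_I Rr_def)
    also have "\<dots> > 0"
    proof -
      obtain x0 where "x0 \<in> I" "v x0 \<noteq> 0" using e by blast
      then have "Rr I v x0 \<noteq> 0" by (simp add: Rr_def)
      moreover have wI: "\<And>x. x \<notin> I \<Longrightarrow> Rr I v x = 0" by (simp add: Rr_def)
      ultimately show ?thesis using Bpos[OF fs_Rr[OF finite_I] wI] by blast
    qed
    finally show ?thesis .
  qed
  show ?thesis unfolding spd_on_def using sym pos by blast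
qed

lemma all3: "spd_on I (\<lambda>x y. Dtilde0 a b J i j x y - Dhat0 a b J i j x y)
    \<and> spd_on I (\<lambda>x y. (- Dhat0 a b J i j x y) - (- Dbar0 a b J i j x y))
    \<and> spd_on I (\<lambda>x y. (- Dbar0 a b J i j x y) - (- Dtilde0 a b J i j x y))"
proof -
  have e1: "(\<lambda>x y. (- Dhat0 a b J i j x y) - (- Dbar0 a b J i j x y))
      = (\<lambda>x y. (1/2) * (Dtilde0 a b J i j x y - Dhat0 a b J i j x y))"
    by (auto simp: fun_eq_iff Dhat0_def Dbar0_def Dtilde0_def opmat_def d2bar_def field_simps)
  have e2: "(\<lambda>x y. (- Dbar0 a b J i j x y) - (- Dtilde0 a b J i j x y))
      = (\<lambda>x y. (1/2) * (Dtilde0 a b J i j x y - Dhat0 a b J i j x y))"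
    by (auto simp: fun_eq_iff Dhat0_def Dbar0_def Dtilde0_def opmat_def d2bar_def field_simps)
  have "spd_on I (\<lambda>x y. (1/2) * (Dtilde0 a b J i j x y - Dhat0 a b J i j x y))"
    by (rule spd_scale[OF spd_main]) simp
  then show ?thesis unfolding e1 e2 using spd_main by blast
qed

end

theorem lemma2p5:
  fixes a b :: "real^'n" and J :: "'n \<Rightarrow> nat"
  assumes "CARD('n) \<ge> 2"
    and "\<forall>i. a$i < b$i"
    and "\<forall>i. J i \<ge> 2"
  shows "\<forall>i j.
      spd_on (inodes a b J) (\<lambda>x y. Dtilde0 a b J i j x y - Dhat0 a b J i j x y)
    \<and> spd_on (inodes a b J) (\<lambda>x y. (- Dhat0 a b J i j x y) - (- Dbar0 a b J i j x y))
    \<and> spd_on (inodes a b J) (\<lambda>x y. (- Dbar0 a b J i j x y) - (- Dtilde0 a b J i j x y))"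
proof -
  interpret grid a b J using assms(2,3) by unfold_locales auto
  show ?thesis using all3 by blast
qed

end
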